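(* Let $r\ge0$ be an integer and let $(W,g)$ be a cubic space of dimension at most $\aleph_0$ with $\mathrm{rrk}(W)\le r$. Then $W$ embeds into the cubic space $V(r)$.
   Context: $k$ is algebraically closed of characteristic different from $2,3$. For $V$ with basis $\{v_i\}_{i\in I}$, the dual functionals $x_i$ are called coordinates; $P_n(V)$ is the space of formal, possibly infinite, $k$-linear combinations of degree-$n$ monomials in the $x_i$. A cubic space is $(V,f)$ with $f\in P_3(V)$; an embedding $(W,g)\to(V,f)$ is a $k$-linear map $\phi:W\to V$ with $f\circ\phi=g$. The strength of a homogeneous $h\in P_n(V)$, $n\ge1$, is the least $s$ with $h=\sum_{i=1}^s a_ib_i$, $a_i,b_i$ homogeneous of positive degree less than $n$ ($\infty$ if none). $\overline{P}_2(V)$ is $P_2(V)$ modulo the subspace of finite-strength quadratic forms; the residual rank $\mathrm{rrk}(f)\in\mathbf{N}\cup\{\infty\}$ is the dimension of the span in $\overline{P}_2(V)$ of the images of the formal partial derivatives $\partial f/\partial x_i$, and $\mathrm{rrk}(V,f)=\mathrm{rrk}(f)$. The cubic space $V(r)$ has coordinates $\{x_i\}_{1\le i\le r}\cup\{y_{i,j}\}_{1\le i\le r,\,j\ge1}\cup\{z_i\}_{i\ge1}$ and form $f_r=3\sum_{i=1}^rx_iq_i+\sum_{i\ge1}z_i^3$, where $q_i=\sum_{j\ge1}y_{i,j}^2$. *)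

theory Defs
  imports Main "HOL-Library.Multiset" "HOL-Library.Extended_Nat"
    "HOL-Computational_Algebra.Polynomial"
begin

text \<open>Formal (possibly infinite) power series in coordinates indexed by 'i:
  a monomial is a finite multiset of indices, a formal series is its coefficient
  function.\<close>

type_synonym ('i, 'k) fseries = "'i multiset \<Rightarrow> 'k"

definition homogeneous :: "nat \<Rightarrow> ('i, 'k::zero) fseries \<Rightarrow> bool" where
  "homogeneous n f \<longleftrightarrow> (\<forall>M. size M \<noteq> n \<longrightarrow> f M = 0)"

definition fmul :: "('i, 'k::comm_ring_1) fseries \<Rightarrow> ('i, 'k) fseries \<Rightarrow> ('i, 'k) fseries" where
  "fmul a b = (\<lambda>M. \<Sum>P\<in>{P. P \<subseteq># M}. a P * b (M - P))"

definition strength :: "nat \<Rightarrow> ('i, 'k::comm_ring_1) fseries \<Rightarrow> enat" where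
  "strength n h = (INF s \<in> {s. \<exists>a b. (\<forall>t<s. \<exists>d e. 0 < d \<and> d < n \<and> 0 < e \<and> e < n \<and>
        homogeneous d (a t) \<and> homogeneous e (b t)) \<and>
        h = (\<lambda>M. \<Sum>t<s. fmul (a t) (b t) M)}. enat s)"

definition fin_strength_quadric :: "('i, 'k::comm_ring_1) fseries \<Rightarrow> bool" where
  "fin_strength_quadric q \<longleftrightarrow> homogeneous 2 q \<and> strength 2 q < \<infinity>"

definition fderiv :: "'i \<Rightarrow> ('i, 'k::comm_ring_1) fseries \<Rightarrow> ('i, 'k) fseries" where
  "fderiv i f = (\<lambda>M. of_nat (count M i + 1) * f (add_mset i M))"

text \<open>Residual rank of a form whose coordinates are indexed by I: the dimension of
  the span of the classes of the partial derivatives in P_2 modulo finite-strength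
  quadrics, i.e. the supremum of the sizes of finite families of partial
  derivatives that are linearly independent modulo finite-strength quadrics.\<close>
definition rrk :: "'i set \<Rightarrow> ('i, 'k::field) fseries \<Rightarrow> enat" where
  "rrk I f = (SUP S \<in> {S. finite S \<and> S \<subseteq> I \<and>
       (\<forall>c. fin_strength_quadric (\<lambda>M. \<Sum>i\<in>S. c i * fderiv i f M) \<longrightarrow> (\<forall>i\<in>S. c i = 0))}.
     enat (card S))"

text \<open>The vector space with basis indexed by A: finitely supported coordinate vectors.\<close>
definition fin_vecs :: "'i set \<Rightarrow> ('i \<Rightarrow> 'k::zero) set" where
  "fin_vecs A = {v. finite {i. v i \<noteq> 0} \<and> (\<forall>i. i \<notin> A \<longrightarrow> v i = 0)}"

definition eval_form :: "nat \<Rightarrow> ('i, 'k::comm_ring_1) fseries \<Rightarrow> ('i \<Rightarrow> 'k) \<Rightarrow> 'k" where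
  "eval_form n f v = (\<Sum>M\<in>{M. size M = n \<and> set_mset M \<subseteq> {i. v i \<noteq> 0}}.
       f M * (\<Prod>i\<in>#M. v i))"

definition cubic_form :: "'i set \<Rightarrow> ('i, 'k::zero) fseries \<Rightarrow> bool" where
  "cubic_form I f \<longleftrightarrow> homogeneous 3 f \<and> (\<forall>M. f M \<noteq> 0 \<longrightarrow> set_mset M \<subseteq> I)"

definition cubic_embedding ::
  "'j set \<Rightarrow> ('j, 'k::comm_ring_1) fseries \<Rightarrow> 'i set \<Rightarrow> ('i, 'k) fseries \<Rightarrow>
   (('j \<Rightarrow> 'k) \<Rightarrow> ('i \<Rightarrow> 'k)) \<Rightarrow> bool" where
  "cubic_embedding J g I f \<phi> \<longleftrightarrow>
     (\<forall>w\<in>fin_vecs J. \<phi> w \<in> fin_vecs I) \<and>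
     (\<forall>v\<in>fin_vecs J. \<forall>w\<in>fin_vecs J. \<phi> (\<lambda>j. v j + w j) = (\<lambda>i. \<phi> v i + \<phi> w i)) \<and>
     (\<forall>c. \<forall>w\<in>fin_vecs J. \<phi> (\<lambda>j. c * w j) = (\<lambda>i. c * \<phi> w i)) \<and>
     (\<forall>w\<in>fin_vecs J. eval_form 3 f (\<phi> w) = eval_form 3 g w)"

text \<open>The cubic space V(r) (indices 0-based: x_i, y_{i,j} for i < r, j any; z_i any).\<close>
datatype vr_idx = Xc nat | Yc nat nat | Zc nat

definition vr_coords :: "nat \<Rightarrow> vr_idx set" where
  "vr_coords r = {Xc i | i. i < r} \<union> {Yc i j | i j. i < r} \<union> range Zc"

text \<open>f_r = 3 sum_i x_i q_i + sum_i z_i^3 with q_i = sum_j y_{i,j}^2, by coefficients.\<close>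
definition f_r :: "nat \<Rightarrow> (vr_idx, 'k::comm_ring_1) fseries" where
  "f_r r M = (if \<exists>i j. i < r \<and> M = {#Xc i, Yc i j, Yc i j#} then 3
              else if \<exists>i. M = {#Zc i, Zc i, Zc i#} then 1 else 0)"

end

theory Submission
  imports Defs
begin


lemma finite_msets:
  assumes "finite T"
  shows "finite {M::'a multiset. size M = n \<and> set_mset M \<subseteq> T}"
proof -
  have "{M::'a multiset. size M = n \<and> set_mset M \<subseteq> T} \<subseteq> mset ` {xs. set xs \<subseteq> T \<and> length xs = n}"
  proof
    fix M :: "'a multiset" assume "M \<in> {M. size M = n \<and> set_mset M \<subseteq> T}"
    moreover obtain xs where "mset xs = M" using ex_mset by blast
    ultimately show "M \<in> mset ` {xs. set xs \<subseteq> T \<and> length xs = n}"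
      by (intro image_eqI[where x=xs]) auto
  qed
  moreover have "finite (mset ` {xs. set xs \<subseteq> T \<and> length xs = n})"
    using finite_lists_length_eq[OF assms] by (rule finite_imageI)
  ultimately show ?thesis by (rule finite_subset)
qed

lemma finite_submsets: "finite {P. P \<subseteq># (M::'a multiset)}"
proof -
  have "{P. P \<subseteq># M} \<subseteq> (\<Union>n\<in>{..size M}. {P. size P = n \<and> set_mset P \<subseteq> set_mset M})"
  proof
    fix P assume "P \<in> {P. P \<subseteq># M}"
    hence "P \<subseteq># M" by simp
    hence "size P \<le> size M" "set_mset P \<subseteq> set_mset M" by (rule size_mset_mono, rule set_mset_mono)
    thus "P \<in> (\<Union>n\<in>{..size M}. {P. size P = n \<and> set_mset P \<subseteq> set_mset M})" by blast
  qed
  moreover have "finite (\<Union>n\<in>{..size M}. {P. size P = n \<and> set_mset P \<subseteq> set_mset M})"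
    by (intro finite_UN_I finite_atMost finite_msets finite_set_mset)
  ultimately show ?thesis by (rule finite_subset)
qed

lemma prod_ne0_set:
  fixes v :: "'i \<Rightarrow> 'k::field"
  shows "(\<Prod>i\<in>#M. v i) \<noteq> 0 \<Longrightarrow> set_mset M \<subseteq> {i. v i \<noteq> 0}"
  by auto

lemma eval_form_superset:
  fixes v :: "'i \<Rightarrow> 'k::field"
  assumes "finite T" "{i. v i \<noteq> 0} \<subseteq> T"
  shows "eval_form n f v = (\<Sum>M\<in>{M. size M = n \<and> set_mset M \<subseteq> T}. f M * (\<Prod>i\<in>#M. v i))"
  unfolding eval_form_def
proof (rule sum.mono_neutral_left)
  show "finite {M. size M = n \<and> set_mset M \<subseteq> T}" using finite_msets[OF assms(1)] .
  show "{M. size M = n \<and> set_mset M \<subseteq> {i. v i \<noteq> 0}} \<subseteq> {M. size M = n \<and> set_mset M \<subseteq> T}"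
    using assms(2) by auto
  show "\<forall>M\<in>{M. size M = n \<and> set_mset M \<subseteq> T} - {M. size M = n \<and> set_mset M \<subseteq> {i. v i \<noteq> 0}}.
        f M * (\<Prod>i\<in>#M. v i) = 0"
  proof
    fix M assume "M \<in> {M. size M = n \<and> set_mset M \<subseteq> T} - {M. size M = n \<and> set_mset M \<subseteq> {i. v i \<noteq> 0}}"
    hence "\<not> set_mset M \<subseteq> {i. v i \<noteq> 0}" by auto
    hence "(\<Prod>i\<in>#M. v i) = 0" using prod_ne0_set by blast
    thus "f M * (\<Prod>i\<in>#M. v i) = 0" by simp
  qed
qed

lemma eval_form_alt:
  fixes v :: "'i \<Rightarrow> 'k::field"
  assumes fin: "finite {i. v i \<noteq> 0}" and "finite \<M>" and "\<forall>M\<in>\<M>. size M = n"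
    and "\<And>M. size M = n \<Longrightarrow> f M \<noteq> 0 \<Longrightarrow> (\<Prod>i\<in>#M. v i) \<noteq> 0 \<Longrightarrow> M \<in> \<M>"
  shows "eval_form n f v = (\<Sum>M\<in>\<M>. f M * (\<Prod>i\<in>#M. v i))"
proof -
  let ?A = "{M. size M = n \<and> set_mset M \<subseteq> {i. v i \<noteq> 0}}"
  have fA: "finite ?A" using finite_msets[OF fin] .
  have "eval_form n f v = (\<Sum>M\<in>?A \<inter> \<M>. f M * (\<Prod>i\<in>#M. v i))"
    unfolding eval_form_def
    by (rule sum.mono_neutral_right[OF fA]) (use assms(4) in auto)
  also have "\<dots> = (\<Sum>M\<in>\<M>. f M * (\<Prod>i\<in>#M. v i))"
    by (rule sum.mono_neutral_left[OF assms(2)]) (use assms(3) prod_ne0_set in fastforce)+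
  finally show ?thesis .
qed



abbreviation supp :: "('i \<Rightarrow> 'k::zero) \<Rightarrow> 'i set" where
  "supp v \<equiv> {i. v i \<noteq> 0}"

lemma eval_fmul:
  fixes v :: "'i \<Rightarrow> 'k::field"
  assumes ha: "homogeneous d a" and hb: "homogeneous e b" and fin: "finite (supp v)"
  shows "eval_form (d+e) (fmul a b) v = eval_form d a v * eval_form e b v"
proof -
  define S where "S = supp v"
  define A where "A n = {M. size M = n \<and> set_mset M \<subseteq> S}" for n
  have fA: "finite (A n)" for n unfolding A_def S_def using finite_msets[OF fin] .
  have "eval_form (d+e) (fmul a b) v = (\<Sum>M\<in>A (d+e). (\<Sum>P\<in>{P. P \<subseteq># M}. a P * b (M - P)) * (\<Prod>i\<in>#M. v i))"
    unfolding eval_form_def fmul_def A_def S_def ..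
  also have "\<dots> = (\<Sum>M\<in>A (d+e). \<Sum>P\<in>{P. P \<subseteq># M \<and> size P = d}. a P * b (M - P) * (\<Prod>i\<in>#M. v i))"
  proof (rule sum.cong[OF refl])
    fix M assume "M \<in> A (d+e)"
    have "(\<Sum>P\<in>{P. P \<subseteq># M}. a P * b (M - P)) * (\<Prod>i\<in>#M. v i)
          = (\<Sum>P\<in>{P. P \<subseteq># M}. a P * b (M - P) * (\<Prod>i\<in>#M. v i))"
      by (simp add: sum_distrib_right)
    also have "\<dots> = (\<Sum>P\<in>{P. P \<subseteq># M \<and> size P = d}. a P * b (M - P) * (\<Prod>i\<in>#M. v i))"
      by (rule sum.mono_neutral_right[OF finite_submsets]) (use ha in \<open>auto simp: homogeneous_def\<close>)
    finally show "(\<Sum>P\<in>{P. P \<subseteq># M}. a P * b (M - P)) * (\<Prod>i\<in>#M. v i)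
          = (\<Sum>P\<in>{P. P \<subseteq># M \<and> size P = d}. a P * b (M - P) * (\<Prod>i\<in>#M. v i))" .
  qed
  also have "\<dots> = (\<Sum>(M,P)\<in>Sigma (A (d+e)) (\<lambda>M. {P. P \<subseteq># M \<and> size P = d}). a P * b (M - P) * (\<Prod>i\<in>#M. v i))"
    by (rule sum.Sigma[OF fA]) (auto intro: finite_subset[OF _ finite_submsets])
  also have "\<dots> = (\<Sum>(P,Q)\<in>A d \<times> A e. a P * b Q * ((\<Prod>i\<in>#P. v i) * (\<Prod>i\<in>#Q. v i)))"
  proof (rule sum.reindex_bij_witness[of _ "\<lambda>(P,Q). (P+Q, P)" "\<lambda>(M,P). (P, M-P)"])
    fix a' assume "a' \<in> Sigma (A (d+e)) (\<lambda>M. {P. P \<subseteq># M \<and> size P = d})"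
    then obtain M P where a': "a' = (M,P)" and M: "M \<in> A (d+e)" and P: "P \<subseteq># M" "size P = d" by auto
    show "(case case a' of (M, P) \<Rightarrow> (P, M - P) of (P, Q) \<Rightarrow> (P + Q, P)) = a'"
      using a' P by auto
    have "set_mset P \<subseteq> set_mset M" "set_mset (M - P) \<subseteq> set_mset M"
      using P(1) by (auto dest: mset_subset_eqD in_diffD)
    moreover have "size (M - P) = e" using M P by (simp add: A_def size_Diff_submset)
    ultimately show "(case a' of (M, P) \<Rightarrow> (P, M - P)) \<in> A d \<times> A e"
      using a' M P by (auto simp: A_def)
    have "(\<Prod>i\<in>#M. v i) = (\<Prod>i\<in>#P. v i) * (\<Prod>i\<in>#(M - P). v i)"
      by (metis P(1) subset_mset.add_diff_inverse image_mset_union prod_mset.union)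
    thus "(case case a' of (M, P) \<Rightarrow> (P, M - P) of (P, Q) \<Rightarrow> a P * b Q * ((\<Prod>i\<in>#P. v i) * (\<Prod>i\<in>#Q. v i))) =
          (case a' of (M, P) \<Rightarrow> a P * b (M - P) * (\<Prod>i\<in>#M. v i))"
      using a' by simp
  next
    fix b' assume "b' \<in> A d \<times> A e"
    then obtain P Q where b': "b' = (P,Q)" and P: "P \<in> A d" and Q: "Q \<in> A e" by auto
    show "(case case b' of (P, Q) \<Rightarrow> (P + Q, P) of (M, P) \<Rightarrow> (P, M - P)) = b'" using b' by auto
    show "(case b' of (P, Q) \<Rightarrow> (P + Q, P)) \<in> Sigma (A (d+e)) (\<lambda>M. {P. P \<subseteq># M \<and> size P = d})"
      using b' P Q by (auto simp: A_def)
  qed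
  also have "\<dots> = (\<Sum>P\<in>A d. a P * (\<Prod>i\<in>#P. v i)) * (\<Sum>Q\<in>A e. b Q * (\<Prod>i\<in>#Q. v i))"
    by (simp add: sum_product sum.cartesian_product mult_ac)
  also have "\<dots> = eval_form d a v * eval_form e b v"
    unfolding eval_form_def A_def S_def ..
  finally show ?thesis .
qed

definition ek :: "'i \<Rightarrow> 'i \<Rightarrow> 'k::zero_neq_one" where
  "ek k = (\<lambda>i. if i = k then 1 else 0)"

lemma eval_split:
  fixes y :: "'i \<Rightarrow> 'k::field"
  assumes fin: "finite (supp y)" and yk: "y k = 0"
  shows "eval_form n f (\<lambda>i. y i + x * ek k i) =
         (\<Sum>m\<le>n. x ^ m * eval_form (n - m) (\<lambda>M. f (M + replicate_mset m k)) y)"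
proof -
  define S where "S = supp y"
  define A where "A n = {M. size M = n \<and> set_mset M \<subseteq> S}" for n
  have fA: "finite (A n)" for n unfolding A_def S_def using finite_msets[OF fin] .
  have kS: "k \<notin> S" using yk by (simp add: S_def)
  let ?v = "\<lambda>i. y i + x * ek k i"
  have vS: "i \<in> S \<Longrightarrow> ?v i = y i" for i using kS by (auto simp: ek_def)
  have "eval_form n f ?v = (\<Sum>M\<in>{M. size M = n \<and> set_mset M \<subseteq> insert k S}. f M * (\<Prod>i\<in>#M. ?v i))"
    by (rule eval_form_superset) (use fin in \<open>auto simp: S_def ek_def split: if_splits\<close>)
  also have "\<dots> = (\<Sum>(m,M)\<in>Sigma {..n} (\<lambda>m. A (n - m)). x ^ m * (f (M + replicate_mset m k) * (\<Prod>i\<in>#M. y i)))"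
  proof (rule sum.reindex_bij_witness[where j="\<lambda>(m,M). M + replicate_mset m k" and i="\<lambda>M. (count M k, filter_mset (\<lambda>i. i \<noteq> k) M)", symmetric])
    fix a' assume "a' \<in> Sigma {..n} (\<lambda>m. A (n - m))"
    then obtain m M where a': "a' = (m,M)" and m: "m \<le> n" and M: "M \<in> A (n - m)" by auto
    have kM: "count M k = 0" using M kS by (auto simp: A_def count_eq_zero_iff)
    have fM: "filter_mset (\<lambda>i. i \<noteq> k) M = M"
      by (rule multiset_eqI) (simp add: kM)
    show "(count (case a' of (m, M) \<Rightarrow> M + replicate_mset m k) k,
           filter_mset (\<lambda>i. i \<noteq> k) (case a' of (m, M) \<Rightarrow> M + replicate_mset m k)) = a'"
      using a' kM fM by simp
    show "(case a' of (m, M) \<Rightarrow> M + replicate_mset m k) \<in> {M. size M = n \<and> set_mset M \<subseteq> insert k S}"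
      using a' m M by (auto simp: A_def)
    have "(\<Prod>i\<in>#M + replicate_mset m k. ?v i) = (\<Prod>i\<in>#M. ?v i) * x ^ m"
      by (simp add: ek_def yk)
    also have "(\<Prod>i\<in>#M. ?v i) = (\<Prod>i\<in>#M. y i)"
      by (rule arg_cong[where f=prod_mset], rule image_mset_cong) (use M vS in \<open>auto simp: A_def\<close>)
    finally show "f (case a' of (m, M) \<Rightarrow> M + replicate_mset m k) * (\<Prod>i\<in>#(case a' of (m, M) \<Rightarrow> M + replicate_mset m k). ?v i) =
        (case a' of (m, M) \<Rightarrow> x ^ m * (f (M + replicate_mset m k) * (\<Prod>i\<in>#M. y i)))"
      using a' by (simp add: mult_ac)
  next
    fix M assume M: "M \<in> {M. size M = n \<and> set_mset M \<subseteq> insert k S}"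
    have dec: "M = filter_mset (\<lambda>i. i \<noteq> k) M + replicate_mset (count M k) k"
      by (rule multiset_eqI) simp
    show "(case (count M k, filter_mset (\<lambda>i. i \<noteq> k) M) of (m, M) \<Rightarrow> M + replicate_mset m k) = M"
      using dec by simp
    have "size M = size (filter_mset (\<lambda>i. i \<noteq> k) M + replicate_mset (count M k) k)"
      using dec by (rule arg_cong)
    hence "size M = size (filter_mset (\<lambda>i. i \<noteq> k) M) + count M k" by simp
    then show "(count M k, filter_mset (\<lambda>i. i \<noteq> k) M) \<in> Sigma {..n} (\<lambda>m. A (n - m))"
      using M by (auto simp: A_def)
  qed
  also have "\<dots> = (\<Sum>m\<le>n. \<Sum>M\<in>A (n - m). x ^ m * (f (M + replicate_mset m k) * (\<Prod>i\<in>#M. y i)))"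
    by (rule sum.Sigma[symmetric]) (auto simp: fA)
  also have "\<dots> = (\<Sum>m\<le>n. x ^ m * eval_form (n - m) (\<lambda>M. f (M + replicate_mset m k)) y)"
    by (simp add: eval_form_def A_def S_def sum_distrib_left)
  finally show ?thesis .
qed

lemma eval1_formula:
  fixes v :: "'i \<Rightarrow> 'k::field"
  assumes "finite T" "supp v \<subseteq> T"
  shows "eval_form 1 a v = (\<Sum>i\<in>T. a {#i#} * v i)"
proof -
  have eq: "{M. size M = 1 \<and> set_mset M \<subseteq> T} = (\<lambda>i. {#i#}) ` T"
  proof (rule set_eqI, rule iffI)
    fix M assume "M \<in> {M. size M = 1 \<and> set_mset M \<subseteq> T}"
    hence M: "size M = 1" "set_mset M \<subseteq> T" by auto
    then obtain i where i: "M = {#i#}" using size_1_singleton_mset by blast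
    hence "i \<in> T" using M(2) by simp
    thus "M \<in> (\<lambda>i. {#i#}) ` T" using i by blast
  next
    fix M assume "M \<in> (\<lambda>i. {#i#}) ` T"
    thus "M \<in> {M. size M = 1 \<and> set_mset M \<subseteq> T}" by auto
  qed
  show ?thesis
    unfolding eval_form_superset[OF assms] eq by (subst sum.reindex) (simp_all add: inj_on_def)
qed

lemma eval0: "eval_form 0 a v = a {#}"
proof -
  have "{M. size M = 0 \<and> set_mset M \<subseteq> {i. v i \<noteq> 0}} = {{#}}" by auto
  thus ?thesis unfolding eval_form_def by simp
qed

definition linf :: "(('i \<Rightarrow> 'k::field) \<Rightarrow> 'k) \<Rightarrow> bool" where
  "linf \<phi> \<longleftrightarrow> (\<forall>u v. finite (supp u) \<longrightarrow> finite (supp v) \<longrightarrow> \<phi> (\<lambda>i. u i + v i) = \<phi> u + \<phi> v) \<and>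
     (\<forall>c u. finite (supp u) \<longrightarrow> \<phi> (\<lambda>i. c * u i) = c * \<phi> u)"

lemma linf_eval1: "linf (eval_form 1 a)"
  unfolding linf_def
proof (intro conjI allI impI)
  fix u v :: "'a \<Rightarrow> 'b" assume fu: "finite (supp u)" and fv: "finite (supp v)"
  let ?T = "supp u \<union> supp v"
  have "eval_form 1 a (\<lambda>i. u i + v i) = (\<Sum>i\<in>?T. a {#i#} * (u i + v i))"
    by (rule eval1_formula) (use fu fv in auto)
  also have "\<dots> = (\<Sum>i\<in>?T. a {#i#} * u i) + (\<Sum>i\<in>?T. a {#i#} * v i)"
    by (simp add: distrib_left sum.distrib)
  also have "(\<Sum>i\<in>?T. a {#i#} * u i) = eval_form 1 a u"
    by (rule eval1_formula[symmetric]) (use fu fv in auto)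
  also have "(\<Sum>i\<in>?T. a {#i#} * v i) = eval_form 1 a v"
    by (rule eval1_formula[symmetric]) (use fu fv in auto)
  finally show "eval_form 1 a (\<lambda>i. u i + v i) = eval_form 1 a u + eval_form 1 a v" .
next
  fix c and u :: "'a \<Rightarrow> 'b" assume fu: "finite (supp u)"
  have "eval_form 1 a (\<lambda>i. c * u i) = (\<Sum>i\<in>supp u. a {#i#} * (c * u i))"
    by (rule eval1_formula) (use fu in auto)
  also have "\<dots> = c * (\<Sum>i\<in>supp u. a {#i#} * u i)"
    by (simp add: sum_distrib_left mult_ac)
  also have "(\<Sum>i\<in>supp u. a {#i#} * u i) = eval_form 1 a u"
    by (rule eval1_formula[symmetric]) (fact fu, rule order_refl)
  finally show "eval_form 1 a (\<lambda>i. c * u i) = c * eval_form 1 a u" .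
qed



lemma eval_sum_series:
  fixes v :: "'i \<Rightarrow> 'k::field"
  shows "eval_form n (\<lambda>M. \<Sum>t\<in>T. h t M) v = (\<Sum>t\<in>T. eval_form n (h t) v)"
  unfolding eval_form_def sum_distrib_right by (rule sum.swap)

lemma eval_scale_series:
  fixes v :: "'i \<Rightarrow> 'k::field"
  shows "eval_form n (\<lambda>M. c * h M) v = c * eval_form n h v"
  unfolding eval_form_def by (simp add: sum_distrib_left mult_ac)

lemma eval_add_series:
  fixes v :: "'i \<Rightarrow> 'k::field"
  shows "eval_form n (\<lambda>M. h1 M + h2 M) v = eval_form n h1 v + eval_form n h2 v"
  unfolding eval_form_def by (simp add: distrib_right sum.distrib)

lemma eval_diff_series:
  fixes v :: "'i \<Rightarrow> 'k::field"
  shows "eval_form n (\<lambda>M. h1 M - h2 M) v = eval_form n h1 v - eval_form n h2 v"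
  unfolding eval_form_def by (simp add: left_diff_distrib sum_subtractf)

lemma eval_zero_vec':
  assumes "0 < n" "\<forall>i. v i = (0::'k::field)"
  shows "eval_form n f v = 0"
proof -
  have "{M. size M = n \<and> set_mset M \<subseteq> {i. v i \<noteq> 0}} = {}"
  proof (rule equals0I)
    fix M assume "M \<in> {M. size M = n \<and> set_mset M \<subseteq> {i. v i \<noteq> 0}}"
    hence M: "size M = n" "set_mset M \<subseteq> {i. v i \<noteq> 0}" by simp_all
    have "{i. v i \<noteq> 0} = {}" using assms(2) by simp
    hence "set_mset M = {}" "size M = n" using M by simp_all
    thus False using assms(1) by simp
  qed
  thus ?thesis unfolding eval_form_def by (simp only: sum.empty)
qed

lemma eval_zero_vec:
  assumes "0 < n"
  shows "eval_form n f (\<lambda>i. 0::'k::field) = 0"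
  by (rule eval_zero_vec'[OF assms]) simp

lemma fin_strength_iff:
  "fin_strength_quadric (q :: ('i,'k::comm_ring_1) fseries) \<longleftrightarrow> homogeneous 2 q \<and>
     (\<exists>(s::nat) a b. (\<forall>t<s. homogeneous 1 (a t) \<and> homogeneous 1 (b t)) \<and> q = (\<lambda>M. \<Sum>t<s. fmul (a t) (b t) M))"
proof -
  let ?X = "{s::nat. \<exists>a b. (\<forall>t<s. \<exists>d e. 0 < d \<and> d < (2::nat) \<and> 0 < e \<and> e < 2 \<and>
        homogeneous d (a t) \<and> homogeneous e (b t)) \<and> q = (\<lambda>M. \<Sum>t<s. fmul (a t) (b t) M)}"
  have dd: "(\<exists>d e. 0 < d \<and> d < (2::nat) \<and> 0 < e \<and> e < 2 \<and> homogeneous d A \<and> homogeneous e B)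
      \<longleftrightarrow> homogeneous 1 A \<and> homogeneous 1 B" for A B :: "('i,'k) fseries"
  proof
    assume "\<exists>d e. 0 < d \<and> d < (2::nat) \<and> 0 < e \<and> e < 2 \<and> homogeneous d A \<and> homogeneous e B"
    then obtain d e where "0 < d" "d < (2::nat)" "0 < e" "e < 2" "homogeneous d A" "homogeneous e B" by blast
    moreover have "d = 1" "e = 1" using calculation by auto
    ultimately show "homogeneous 1 A \<and> homogeneous 1 B" by simp
  next
    assume "homogeneous 1 A \<and> homogeneous 1 B" thus "\<exists>d e. 0 < d \<and> d < (2::nat) \<and> 0 < e \<and> e < 2 \<and> homogeneous d A \<and> homogeneous e B"
      by (intro exI[of _ 1]) auto
  qed
  have e: "strength 2 q = (INF s\<in>?X. enat s)" unfolding strength_def by (rule refl)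
  have "strength 2 q < \<infinity> \<longleftrightarrow> ?X \<noteq> {}"
  proof
    assume lt: "strength 2 q < \<infinity>"
    show "?X \<noteq> {}"
    proof
      assume E: "?X = {}"
      have inf_empty: "\<And>X. X = {} \<Longrightarrow> (INF s\<in>X. enat s) = \<infinity>" by (simp add: top_enat_def)
      have "strength 2 q = \<infinity>" unfolding e by (rule inf_empty[OF E])
      thus False using lt by simp
    qed
  next
    assume "?X \<noteq> {}"
    then obtain s where "s \<in> ?X" by blast
    hence "strength 2 q \<le> enat s" unfolding strength_def by (rule INF_lower)
    thus "strength 2 q < \<infinity>" by (rule le_less_trans) simp
  qed
  moreover have "?X \<noteq> {} \<longleftrightarrow> (\<exists>(s::nat) a b. (\<forall>t<s. homogeneous 1 (a t) \<and> homogeneous 1 (b t)) \<and> q = (\<lambda>M. \<Sum>t<s. fmul (a t) (b t) M))"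
    unfolding ex_in_conv[symmetric] mem_Collect_eq dd ..
  ultimately show ?thesis unfolding fin_strength_quadric_def by blast
qed

lemma fin_strength_scale:
  assumes "fin_strength_quadric (q :: ('i,'k::comm_ring_1) fseries)"
  shows "fin_strength_quadric (\<lambda>M. c * q M)"
proof -
  obtain s :: nat and a b where h: "\<forall>t<s. homogeneous 1 (a t) \<and> homogeneous 1 (b t)"
    and q: "q = (\<lambda>M. \<Sum>t<s. fmul (a t) (b t) M)" and hq: "homogeneous 2 q"
    using assms unfolding fin_strength_iff by blast
  define a' where "a' = (\<lambda>t M. c * a t M)"
  have H1: "\<forall>t<s. homogeneous 1 (a' t) \<and> homogeneous 1 (b t)" using h by (simp add: homogeneous_def a'_def)
  have H2: "(\<lambda>M. c * q M) = (\<lambda>M. \<Sum>t<s. fmul (a' t) (b t) M)"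
    unfolding q fmul_def a'_def by (simp add: sum_distrib_left mult_ac)
  have H3: "homogeneous 2 (\<lambda>M. c * q M)" using hq by (simp add: homogeneous_def)
  have "\<exists>(s'::nat) a'' b'. (\<forall>t<s'. homogeneous 1 (a'' t) \<and> homogeneous 1 (b' t)) \<and>
      (\<lambda>M. c * q M) = (\<lambda>M. \<Sum>t<s'. fmul (a'' t) (b' t) M)"
    using H1 H2 by blast
  thus ?thesis using H3 unfolding fin_strength_iff by blast
qed

lemma fin_strength_zero: "fin_strength_quadric (\<lambda>M. 0 :: 'k::comm_ring_1)"
  unfolding fin_strength_iff
proof (intro conjI)
  show "homogeneous 2 (\<lambda>M. 0::'k)" by (simp add: homogeneous_def)
  show "\<exists>(s::nat) a b. (\<forall>t<s. homogeneous 1 (a t) \<and> homogeneous 1 (b t)) \<and>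
      (\<lambda>M. 0::'k) = (\<lambda>M. \<Sum>t<s. fmul (a t) (b t) M)"
    by (rule exI[where x=0]) simp
qed

lemma fin_strength_eval:
  assumes "fin_strength_quadric (q :: ('i,'k::field) fseries)"
  shows "\<exists>(s::nat) a b. \<forall>v::'i\<Rightarrow>'k. finite (supp v) \<longrightarrow>
           eval_form 2 q v = (\<Sum>t<s. eval_form 1 (a t) v * eval_form 1 (b t) v)"
proof -
  obtain s :: nat and a b where h: "\<forall>t<s. homogeneous 1 (a t) \<and> homogeneous 1 (b t)"
    and q: "q = (\<lambda>M. \<Sum>t<s. fmul (a t) (b t) M)"
    using assms unfolding fin_strength_iff by blast
  have "eval_form 2 q v = (\<Sum>t<s. eval_form 1 (a t) v * eval_form 1 (b t) v)" if "finite (supp v)" for v :: "'i \<Rightarrow> 'k"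
    unfolding q eval_sum_series
    by (rule sum.cong[OF refl]) (use eval_fmul[of 1 _ 1 _ v] h that in \<open>simp add: numeral_2_eq_2\<close>)
  thus ?thesis by blast
qed



lemma fderiv_outside:
  assumes "cubic_form J g" "j \<notin> J"
  shows "fderiv j g M = 0"
proof -
  have "g (add_mset j M) = 0"
  proof (rule ccontr)
    assume "g (add_mset j M) \<noteq> 0"
    hence "set_mset (add_mset j M) \<subseteq> J" using assms(1) unfolding cubic_form_def by blast
    thus False using assms(2) by simp
  qed
  thus ?thesis by (simp add: fderiv_def)
qed

lemma rrk_relations:
  fixes g :: "(nat, 'k::field) fseries"
  assumes cubic: "cubic_form J g" and rrk: "rrk J g \<le> enat r"
  shows "\<exists>S cc. finite S \<and> card S \<le> r \<and>
     (\<forall>j. fin_strength_quadric (\<lambda>M. fderiv j g M - (\<Sum>i\<in>S. cc j i * fderiv i g M)))"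
proof -
  define indep where "indep S \<longleftrightarrow> (\<forall>c. fin_strength_quadric (\<lambda>M. \<Sum>i\<in>S. c i * fderiv i g M) \<longrightarrow> (\<forall>i\<in>S. c i = 0))" for S
  have bound: "card S \<le> r" if "finite S" "S \<subseteq> J" "indep S" for S
  proof -
    have "enat (card S) \<le> rrk J g" unfolding rrk_def
      by (rule SUP_upper) (use that in \<open>auto simp: indep_def\<close>)
    hence "enat (card S) \<le> enat r" using rrk by (rule order_trans)
    thus ?thesis by simp
  qed
  define K where "K = {n. \<exists>S. finite S \<and> S \<subseteq> J \<and> indep S \<and> card S = n}"
  have "indep {}" unfolding indep_def by simp
  hence "0 \<in> K" unfolding K_def by (intro CollectI exI[of _ "{}"]) simp
  have "K \<subseteq> {..r}" unfolding K_def using bound by blast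
  hence finK: "finite K" using finite_subset by blast
  have "Max K \<in> K" using Max_in[OF finK] \<open>0 \<in> K\<close> by blast
  then obtain S where S: "finite S" "S \<subseteq> J" "indep S" "card S = Max K" unfolding K_def by blast
  have rel: "\<exists>c. fin_strength_quadric (\<lambda>M. fderiv j g M - (\<Sum>i\<in>S. c i * fderiv i g M))" for j
  proof (cases "j \<in> S")
    case True
    have "(\<lambda>M. fderiv j g M - (\<Sum>i\<in>S. (if i = j then 1 else 0) * fderiv i g M)) = (\<lambda>M. 0)"
    proof (rule ext)
      fix M
      have "(\<Sum>i\<in>S. (if i = j then 1 else 0) * fderiv i g M) = (\<Sum>i\<in>S. if i = j then fderiv i g M else 0)"
        by (rule sum.cong) auto
      also have "\<dots> = fderiv j g M" using True S(1) by (simp add: sum.delta)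
      finally show "fderiv j g M - (\<Sum>i\<in>S. (if i = j then 1 else 0) * fderiv i g M) = 0" by simp
    qed
    hence "fin_strength_quadric (\<lambda>M. fderiv j g M - (\<Sum>i\<in>S. (if i = j then 1 else 0) * fderiv i g M))"
      using fin_strength_zero by simp
    thus ?thesis by (rule exI[where x="\<lambda>i. if i = j then 1 else 0"])
  next
    case jS: False
    show ?thesis
    proof (cases "j \<in> J")
      case False
      have "(\<lambda>M. fderiv j g M - (\<Sum>i\<in>S. (\<lambda>i. 0) i * fderiv i g M)) = (\<lambda>M. 0)"
        using fderiv_outside[OF cubic False] by simp
      hence "fin_strength_quadric (\<lambda>M. fderiv j g M - (\<Sum>i\<in>S. (\<lambda>i. 0) i * fderiv i g M))"
        using fin_strength_zero by simp
      thus ?thesis by (rule exI[where x="\<lambda>i. 0"])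
    next
      case True
      have "\<not> indep (insert j S)"
      proof
        assume "indep (insert j S)"
        hence "card (insert j S) \<in> K" unfolding K_def using S True by blast
        hence "card (insert j S) \<le> Max K" using finK by simp
        thus False using S jS by simp
      qed
      then obtain c where c: "fin_strength_quadric (\<lambda>M. \<Sum>i\<in>insert j S. c i * fderiv i g M)"
        and nz: "\<exists>i\<in>insert j S. c i \<noteq> 0" unfolding indep_def by blast
      have ins: "(\<Sum>i\<in>insert j S. c i * fderiv i g M) = c j * fderiv j g M + (\<Sum>i\<in>S. c i * fderiv i g M)" for M
        using S(1) jS by simp
      have cj: "c j \<noteq> 0"
      proof
        assume "c j = 0"
        hence "fin_strength_quadric (\<lambda>M. \<Sum>i\<in>S. c i * fderiv i g M)" using c ins by simp
        hence "\<forall>i\<in>S. c i = 0" using S(3) unfolding indep_def by blast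
        thus False using nz \<open>c j = 0\<close> by auto
      qed
      have "(\<lambda>M. fderiv j g M - (\<Sum>i\<in>S. (- c i / c j) * fderiv i g M)) =
            (\<lambda>M. (1 / c j) * (\<Sum>i\<in>insert j S. c i * fderiv i g M))"
      proof (rule ext)
        fix M
        have "(\<Sum>i\<in>S. (- c i / c j) * fderiv i g M) = - (1 / c j) * (\<Sum>i\<in>S. c i * fderiv i g M)"
          by (simp add: sum_distrib_left)
        thus "fderiv j g M - (\<Sum>i\<in>S. (- c i / c j) * fderiv i g M) =
            (1 / c j) * (\<Sum>i\<in>insert j S. c i * fderiv i g M)"
          using cj by (simp add: ins field_simps)
      qed
      hence "fin_strength_quadric (\<lambda>M. fderiv j g M - (\<Sum>i\<in>S. (\<lambda>i. - c i / c j) i * fderiv i g M))"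
        using fin_strength_scale[OF c, of "1 / c j"] by simp
      thus ?thesis by (rule exI[where x="\<lambda>i. - c i / c j"])
    qed
  qed
  have "\<exists>cc. \<forall>j. fin_strength_quadric (\<lambda>M. fderiv j g M - (\<Sum>i\<in>S. cc j i * fderiv i g M))"
    by (rule choice) (use rel in blast)
  then obtain cc where "\<forall>j. fin_strength_quadric (\<lambda>M. fderiv j g M - (\<Sum>i\<in>S. cc j i * fderiv i g M))"
    by blast
  moreover have "card S \<le> r" using bound S by blast
  ultimately show ?thesis using S(1) by blast
qed



definition Qn :: "nat \<Rightarrow> (nat \<Rightarrow> 'k::zero) \<Rightarrow> nat \<Rightarrow> 'k" where
  "Qn n w = (\<lambda>i. if n \<le> i then w i else 0)"

lemma Qn_0: "Qn 0 w = w" by (simp add: Qn_def)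

lemma Qn_vanish: "supp w \<subseteq> {..<N} \<Longrightarrow> N \<le> n \<Longrightarrow> Qn n w = (\<lambda>i. 0)"
  unfolding Qn_def by (rule ext) (auto)

lemma Qn_step: "Qn n (w :: nat \<Rightarrow> 'k::field) = (\<lambda>i. Qn (Suc n) w i + w n * ek n i)"
  unfolding Qn_def ek_def
proof (rule ext)
  fix i show "(if n \<le> i then w i else 0) = (if Suc n \<le> i then w i else 0) + w n * (if i = n then 1 else 0)"
    by (cases "i = n") auto
qed

lemma Qn_at: "Qn (Suc n) w n = 0" by (simp add: Qn_def)

lemma Qn_fin: "finite (supp w) \<Longrightarrow> finite (supp (Qn n w))"
  by (rule finite_subset[of _ "supp w"]) (auto simp: Qn_def)

lemma linf_Qn:
  assumes "linf (p :: (nat \<Rightarrow> 'k::field) \<Rightarrow> 'k)"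
  shows "linf (\<lambda>w. p (Qn n w))"
proof -
  have a: "Qn n (\<lambda>i. u i + v i) = (\<lambda>i. Qn n u i + Qn n v i)" for u v :: "nat \<Rightarrow> 'k"
    by (rule ext) (simp add: Qn_def)
  have b: "Qn n (\<lambda>i. c * u i) = (\<lambda>i. c * Qn n u i)" for c and u :: "nat \<Rightarrow> 'k"
    by (rule ext) (simp add: Qn_def)
  show ?thesis using assms unfolding linf_def a b by (simp add: Qn_fin)
qed

lemma linf_coord: "linf (\<lambda>w::nat \<Rightarrow> 'k::field. w n)"
  unfolding linf_def by simp

lemma linf_zero_at0:
  assumes "linf (p :: ('i \<Rightarrow> 'k::field) \<Rightarrow> 'k)"
  shows "p (\<lambda>i. 0) = 0"
proof -
  have fin0: "finite (supp (\<lambda>i::'i. 0::'k))" by simp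
  have H: "\<forall>c u. finite (supp u) \<longrightarrow> p (\<lambda>i. c * u i) = c * p u" using assms unfolding linf_def by blast
  show ?thesis using H[rule_format, OF fin0, of 0] by simp
qed

definition lc :: "'k::field \<Rightarrow> 'k \<Rightarrow> 'k \<Rightarrow> ('v \<Rightarrow> 'k) \<Rightarrow> ('v \<Rightarrow> 'k) \<Rightarrow> ('v \<Rightarrow> 'k) \<Rightarrow> 'v \<Rightarrow> 'k" where
  "lc \<alpha> \<beta> \<gamma> X p q = (\<lambda>w. \<alpha> * X w + \<beta> * p w + \<gamma> * q w)"

lemma linf_lc:
  assumes "linf X" "linf p" "linf q"
  shows "linf (lc \<alpha> \<beta> \<gamma> X p q)"
  using assms unfolding linf_def lc_def by (simp add: algebra_simps)

definition cube4 :: "'k::field \<Rightarrow> ('v \<Rightarrow> 'k) \<Rightarrow> ('v \<Rightarrow> 'k) \<Rightarrow> ('v \<Rightarrow> 'k) \<Rightarrow> ('v \<Rightarrow> 'k) list" where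
  "cube4 h X p q = [lc (3*h) h (3*h) X p q, lc (-3*h) (-h) (3*h) X p q,
                    lc (-3*h) h (-3*h) X p q, lc (3*h) (-h) (-3*h) X p q]"

definition cubeT :: "'k::field \<Rightarrow> ('v \<Rightarrow> 'k) \<Rightarrow> ('v \<Rightarrow> 'k) \<Rightarrow> ('v \<Rightarrow> 'k) list" where
  "cubeT h X L = [lc 1 h 0 X L L, lc (-1) h 0 X L L, lc 0 (-h) 0 X L L, lc 0 (-h) 0 X L L]"

definition sq2 :: "'k::field \<Rightarrow> 'k \<Rightarrow> ('v \<Rightarrow> 'k) \<Rightarrow> ('v \<Rightarrow> 'k) \<Rightarrow> ('v \<Rightarrow> 'k) list" where
  "sq2 h2 ii X L = [lc h2 h2 0 X L L, lc (ii*h2) (-ii*h2) 0 X L L]"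

lemma cube4_sum:
  fixes h :: "'k::field"
  assumes "6 * h = 1"
  shows "(\<Sum>c\<leftarrow>cube4 h X p q. c w ^ 3) = X w * p w * q w"
proof -
  have e: "(3*h*a + h*b + 3*h*c)^3 + (-3*h*a - h*b + 3*h*c)^3 + (-3*h*a + h*b - 3*h*c)^3 + (3*h*a - h*b - 3*h*c)^3
        = (6*h)^3 * (a*b*c)" for a b c :: 'k
    by algebra
  have e': "(3*h*X w + h*p w + 3*h*q w)^3 + (-3*h*X w - h*p w + 3*h*q w)^3 + (-3*h*X w + h*p w - 3*h*q w)^3 + (3*h*X w - h*p w - 3*h*q w)^3
        = X w * p w * q w"
    using e[of "X w" "p w" "q w"] by (simp only: assms power_one mult_1)
  show ?thesis using e' by (simp add: cube4_def lc_def algebra_simps)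
qed

lemma cubeT_sum:
  fixes h :: "'k::field"
  assumes "6 * h = 1"
  shows "(\<Sum>c\<leftarrow>cubeT h X L. c w ^ 3) = X w ^ 2 * L w"
proof -
  have e: "(a + h*l)^3 + (-a + h*l)^3 + (-h*l)^3 + (-h*l)^3 = (6*h) * (a^2*l)" for a l :: 'k
    by algebra
  have e': "(X w + h*L w)^3 + (-X w + h*L w)^3 + (-h*L w)^3 + (-h*L w)^3 = X w ^ 2 * L w"
    using e[of "X w" "L w"] by (simp only: assms mult_1)
  show ?thesis using e' by (simp add: cubeT_def lc_def algebra_simps)
qed

lemma sq2_sum:
  fixes h2 :: "'k::field"
  assumes "2 * h2 = 1" "ii * ii = -1"
  shows "(\<Sum>c\<leftarrow>sq2 h2 ii X L. c w ^ 2) = X w * L w"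
proof -
  have e: "(h2*a + h2*l)^2 + (ii*h2*a + (-ii*h2)*l)^2 = (2*h2)^2 * (a*l) + (ii*ii + 1) * (h2*(a - l))^2" for a l :: 'k
    by algebra
  have e': "(h2*X w + h2*L w)^2 + (ii*h2*X w + (-ii*h2)*L w)^2 = X w * L w"
    using e[of "X w" "L w"] by (simp add: assms)
  show ?thesis using e' by (simp add: sq2_def lc_def algebra_simps)
qed

lemma telescope:
  fixes F :: "(nat \<Rightarrow> 'k::field) \<Rightarrow> 'k"
  assumes "supp w \<subseteq> {..<N}" "F (\<lambda>i. 0) = 0"
  shows "F w = (\<Sum>n<N. F (Qn n w) - F (Qn (Suc n) w))"
  unfolding sum_lessThan_telescope'[of "\<lambda>n. F (Qn n w)"] Qn_0 Qn_vanish[OF assms(1) order_refl] assms(2)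
  by simp



lemma exp1:
  fixes y :: "'i \<Rightarrow> 'k::field"
  assumes fin: "finite (supp y)" and yk: "y k = 0"
  shows "eval_form 1 a (\<lambda>i. y i + x * ek k i) = eval_form 1 a y + x * a {#k#}"
  unfolding eval_split[OF fin yk] by (simp add: eval0)

lemma exp2:
  fixes y :: "'i \<Rightarrow> 'k::field"
  assumes fin: "finite (supp y)" and yk: "y k = 0"
  shows "eval_form 2 a (\<lambda>i. y i + x * ek k i) =
    eval_form 2 a y + x * eval_form 1 (\<lambda>M. a (M + {#k#})) y + x^2 * a {#k,k#}"
  unfolding eval_split[OF fin yk] by (simp add: eval0 eval_nat_numeral)

lemma exp3:
  fixes y :: "'i \<Rightarrow> 'k::field"
  assumes fin: "finite (supp y)" and yk: "y k = 0"
  shows "eval_form 3 a (\<lambda>i. y i + x * ek k i) =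
    eval_form 3 a y + x * eval_form 2 (\<lambda>M. a (M + {#k#})) y + x^2 * eval_form 1 (\<lambda>M. a (M + {#k,k#})) y
      + x^3 * a {#k,k,k#}"
  unfolding eval_split[OF fin yk] by (simp add: eval0 eval_nat_numeral add_ac)

lemma eval_fderiv:
  fixes y :: "'i \<Rightarrow> 'k::field"
  assumes yk: "y k = 0"
  shows "eval_form n (fderiv k g) y = eval_form n (\<lambda>M. g (M + {#k#})) y"
  unfolding eval_form_def
proof (rule sum.cong[OF refl])
  fix M assume "M \<in> {M. size M = n \<and> set_mset M \<subseteq> {i. y i \<noteq> 0}}"
  hence "k \<notin># M" using yk by auto
  hence "count M k = 0" by (simp add: count_eq_zero_iff)
  thus "fderiv k g M * (\<Prod>i\<in>#M. y i) = g (M + {#k#}) * (\<Prod>i\<in>#M. y i)"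
    by (simp add: fderiv_def)
qed

definition Df :: "(nat, 'k::field) fseries \<Rightarrow> nat \<Rightarrow> (nat \<Rightarrow> 'k) \<Rightarrow> 'k" where
  "Df g i = eval_form 2 (fderiv i g)"

definition lamser :: "(nat \<Rightarrow> nat \<Rightarrow> 'k::field) \<Rightarrow> nat \<Rightarrow> (nat, 'k) fseries" where
  "lamser cc i = (\<lambda>M. if size M = 1 then sum_mset (image_mset (\<lambda>j. cc j i) M) else 0)"

definition lam :: "(nat \<Rightarrow> nat \<Rightarrow> 'k::field) \<Rightarrow> nat \<Rightarrow> (nat \<Rightarrow> 'k) \<Rightarrow> 'k" where
  "lam cc i = eval_form 1 (lamser cc i)"

definition Cf :: "(nat, 'k::field) fseries \<Rightarrow> nat set \<Rightarrow> (nat \<Rightarrow> nat \<Rightarrow> 'k) \<Rightarrow> (nat \<Rightarrow> 'k) \<Rightarrow> 'k" where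
  "Cf g S cc w = eval_form 3 g w - (\<Sum>i\<in>S. lam cc i w * Df g i w)"

definition MDs :: "(nat, 'k::field) fseries \<Rightarrow> nat \<Rightarrow> nat \<Rightarrow> (nat, 'k) fseries" where
  "MDs g n i = (\<lambda>M. fderiv i g (M + {#n#}))"

definition kap :: "(nat, 'k::field) fseries \<Rightarrow> nat \<Rightarrow> nat \<Rightarrow> 'k" where
  "kap g n i = fderiv i g {#n,n#}"

definition P2s :: "(nat, 'k::field) fseries \<Rightarrow> nat set \<Rightarrow> (nat \<Rightarrow> nat \<Rightarrow> 'k) \<Rightarrow> nat \<Rightarrow> (nat, 'k) fseries" where
  "P2s g S cc n = (\<lambda>M. g (M + {#n,n#}) - (\<Sum>i\<in>S. cc n i * MDs g n i M + kap g n i * lamser cc i M))"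

definition P3 :: "(nat, 'k::field) fseries \<Rightarrow> nat set \<Rightarrow> (nat \<Rightarrow> nat \<Rightarrow> 'k) \<Rightarrow> nat \<Rightarrow> 'k" where
  "P3 g S cc n = g {#n,n,n#} - (\<Sum>i\<in>S. cc n i * kap g n i)"

lemma lamser_single: "lamser cc i {#n#} = cc n i"
  by (simp add: lamser_def)

lemma ring_id:
  fixes x :: "'k::comm_ring_1"
  assumes "T = Dn - SCD"
  shows "(Gy + x*Dn + x^2*LGy + x^3*g3 - (SLD + x*SCD + x*SLM + x^2*SQ2 + x^3*SQ3)) - (Gy - SLD)
       = x * T + x * (- SLM) + x^2 * ((LGy - SQ2) + x * (g3 - SQ3))"
  unfolding assms by (simp add: algebra_simps power2_eq_square power3_eq_cube)

lemma step_C: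
  fixes y :: "nat \<Rightarrow> 'k::field"
  assumes fin: "finite S" "finite (supp y)" and yn: "y n = 0"
    and HS: "Df g n y - (\<Sum>i\<in>S. cc n i * Df g i y) = T"
  shows "Cf g S cc (\<lambda>i. y i + x * ek n i) - Cf g S cc y =
     x * T + x * (\<Sum>i\<in>S. (- lam cc i y) * eval_form 1 (MDs g n i) y) +
     x^2 * (eval_form 1 (P2s g S cc n) y + x * P3 g S cc n)"
proof -
  let ?v = "\<lambda>i. y i + x * ek n i"
  have G: "eval_form 3 g ?v = eval_form 3 g y + x * Df g n y + x^2 * eval_form 1 (\<lambda>M. g (M + {#n,n#})) y
      + x^3 * g {#n,n,n#}"
    unfolding exp3[OF fin(2) yn] Df_def eval_fderiv[of y n, OF yn] ..
  have D: "Df g i ?v = Df g i y + x * eval_form 1 (MDs g n i) y + x^2 * kap g n i" for i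
    unfolding Df_def exp2[OF fin(2) yn] MDs_def kap_def ..
  have L: "lam cc i ?v = lam cc i y + x * cc n i" for i
    unfolding lam_def exp1[OF fin(2) yn] lamser_single ..
  define l where "l i = lam cc i y" for i
  define d where "d i = Df g i y" for i
  define m where "m i = eval_form 1 (MDs g n i) y" for i
  define k where "k i = kap g n i" for i
  define c where "c i = cc n i" for i
  have tm: "(l i + x * c i) * (d i + x * m i + x^2 * k i) =
      l i * d i + x * (c i * d i) + x * (l i * m i) + x^2 * (c i * m i + k i * l i) + x^3 * (c i * k i)" for i
    by (simp add: algebra_simps power2_eq_square power3_eq_cube)
  have sumexp: "(\<Sum>i\<in>S. (l i + x * c i) * (d i + x * m i + x^2 * k i)) =
      (\<Sum>i\<in>S. l i * d i) + x * (\<Sum>i\<in>S. c i * d i) + x * (\<Sum>i\<in>S. l i * m i) +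
      x^2 * (\<Sum>i\<in>S. c i * m i + k i * l i) + x^3 * (\<Sum>i\<in>S. c i * k i)"
    unfolding tm by (simp add: sum.distrib sum_distrib_left distrib_left)
  have P2: "eval_form 1 (P2s g S cc n) y = eval_form 1 (\<lambda>M. g (M + {#n,n#})) y - (\<Sum>i\<in>S. c i * m i + k i * l i)"
    by (simp only: P2s_def eval_diff_series eval_sum_series eval_add_series eval_scale_series)
      (simp add: c_def m_def k_def l_def lam_def)
  have "Cf g S cc ?v - Cf g S cc y =
     (eval_form 3 g y + x * Df g n y + x^2 * eval_form 1 (\<lambda>M. g (M + {#n,n#})) y + x^3 * g {#n,n,n#}
       - ((\<Sum>i\<in>S. l i * d i) + x * (\<Sum>i\<in>S. c i * d i) + x * (\<Sum>i\<in>S. l i * m i) +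
      x^2 * (\<Sum>i\<in>S. c i * m i + k i * l i) + x^3 * (\<Sum>i\<in>S. c i * k i))) - (eval_form 3 g y - (\<Sum>i\<in>S. l i * d i))"
    unfolding Cf_def G D L sumexp[unfolded l_def d_def m_def k_def c_def] l_def d_def m_def k_def c_def ..
  also have "\<dots> = x * T + x * (- (\<Sum>i\<in>S. l i * m i)) + x^2 * ((eval_form 1 (\<lambda>M. g (M + {#n,n#})) y - (\<Sum>i\<in>S. c i * m i + k i * l i))
        + x * (g {#n,n,n#} - (\<Sum>i\<in>S. c i * k i)))"
    by (rule ring_id) (simp add: HS[symmetric] c_def d_def)
  also have "\<dots> = x * T + x * (\<Sum>i\<in>S. (- lam cc i y) * eval_form 1 (MDs g n i) y) +
     x^2 * (eval_form 1 (P2s g S cc n) y + x * P3 g S cc n)"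
    unfolding P2 P3_def by (simp add: l_def m_def c_def k_def sum_negf)
  finally show ?thesis .
qed



lemma sum_list_map_concat: "sum_list (map f (concat xss)) = sum_list (map (\<lambda>xs. sum_list (map f xs)) xss)"
  by (induction xss) auto

lemma sum_list_upt: "sum_list (map f [0..<s]) = (\<Sum>t<s. f t)"
  by (simp add: sum_set_upt_conv_sum_list_nat[symmetric] atLeast0LessThan)

lemma sum_list_sorted: "finite S \<Longrightarrow> sum_list (map f (sorted_list_of_set S)) = sum f S"
  by (simp add: sum_list_distinct_conv_sum_set)

definition cubesN :: "(nat,'k::field) fseries \<Rightarrow> nat set \<Rightarrow> (nat\<Rightarrow>nat\<Rightarrow>'k) \<Rightarrow> (nat \<Rightarrow> nat) \<Rightarrow>
    (nat \<Rightarrow> nat \<Rightarrow> (nat,'k) fseries) \<Rightarrow> (nat \<Rightarrow> nat \<Rightarrow> (nat,'k) fseries) \<Rightarrow> 'k \<Rightarrow> nat \<Rightarrow> ((nat \<Rightarrow> 'k) \<Rightarrow> 'k) list" where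
 "cubesN g S cc sf af bf h n =
   concat (map (\<lambda>t. cube4 h (\<lambda>w. w n) (\<lambda>w. eval_form 1 (af n t) (Qn (Suc n) w)) (\<lambda>w. eval_form 1 (bf n t) (Qn (Suc n) w))) [0..<sf n])
 @ concat (map (\<lambda>i. cube4 h (\<lambda>w. w n) (\<lambda>w. - lam cc i (Qn (Suc n) w)) (\<lambda>w. eval_form 1 (MDs g n i) (Qn (Suc n) w))) (sorted_list_of_set S))
 @ cubeT h (\<lambda>w. w n) (\<lambda>w. eval_form 1 (P2s g S cc n) (Qn (Suc n) w) + w n * P3 g S cc n)"

definition sqN :: "(nat,'k::field) fseries \<Rightarrow> nat \<Rightarrow> nat \<Rightarrow> 'k \<Rightarrow> 'k \<Rightarrow> ((nat \<Rightarrow> 'k) \<Rightarrow> 'k) list" where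
  "sqN g n i h2 ii = sq2 h2 ii (\<lambda>w. w n) (\<lambda>w. eval_form 1 (MDs g n i) (Qn (Suc n) w) + kap g n i * w n)"

lemma cubesN_sum:
  fixes h :: "'k::field"
  assumes h: "6 * h = 1" and S: "finite S"
  shows "(\<Sum>c\<leftarrow>cubesN g S cc sf af bf h n. c w ^ 3) =
     w n * (\<Sum>t<sf n. eval_form 1 (af n t) (Qn (Suc n) w) * eval_form 1 (bf n t) (Qn (Suc n) w))
   + w n * (\<Sum>i\<in>S. (- lam cc i (Qn (Suc n) w)) * eval_form 1 (MDs g n i) (Qn (Suc n) w))
   + (w n)^2 * (eval_form 1 (P2s g S cc n) (Qn (Suc n) w) + w n * P3 g S cc n)"
  apply (simp only: cubesN_def map_append sum_list_append sum_list_map_concat map_map o_def cube4_sum[OF h] cubeT_sum[OF h]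
    sum_list_upt sum_list_sorted[OF S])
  apply (simp add: sum_distrib_left mult_ac)
  done

lemma step_cubes:
  fixes w :: "nat \<Rightarrow> 'k::field"
  assumes h: "6 * h = 1" and S: "finite S" and fin: "finite (supp w)"
    and HS: "\<forall>v. finite (supp v) \<longrightarrow> Df g n v - (\<Sum>i\<in>S. cc n i * Df g i v) =
               (\<Sum>t<sf n. eval_form 1 (af n t) v * eval_form 1 (bf n t) v)"
  shows "Cf g S cc (Qn n w) - Cf g S cc (Qn (Suc n) w) = (\<Sum>c\<leftarrow>cubesN g S cc sf af bf h n. c w ^ 3)"
proof -
  let ?y = "Qn (Suc n) w"
  have fy: "finite (supp ?y)" using Qn_fin[OF fin] .
  have "Cf g S cc (Qn n w) - Cf g S cc ?y = Cf g S cc (\<lambda>i. ?y i + w n * ek n i) - Cf g S cc ?y"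
    by (subst Qn_step) (rule refl)
  also have "\<dots> = w n * (\<Sum>t<sf n. eval_form 1 (af n t) ?y * eval_form 1 (bf n t) ?y)
     + w n * (\<Sum>i\<in>S. (- lam cc i ?y) * eval_form 1 (MDs g n i) ?y)
     + (w n)^2 * (eval_form 1 (P2s g S cc n) ?y + w n * P3 g S cc n)"
    by (rule step_C[OF S fy Qn_at]) (use HS fy in blast)
  also have "\<dots> = (\<Sum>c\<leftarrow>cubesN g S cc sf af bf h n. c w ^ 3)"
    by (rule cubesN_sum[OF h S, symmetric])
  finally show ?thesis .
qed

lemma step_sq:
  fixes w :: "nat \<Rightarrow> 'k::field"
  assumes h2: "2 * h2 = 1" and ii: "ii * ii = -1" and fin: "finite (supp w)"
  shows "Df g i (Qn n w) - Df g i (Qn (Suc n) w) = (\<Sum>c\<leftarrow>sqN g n i h2 ii. c w ^ 2)"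
proof -
  let ?y = "Qn (Suc n) w"
  have fy: "finite (supp ?y)" using Qn_fin[OF fin] .
  have "Df g i (Qn n w) - Df g i ?y = Df g i (\<lambda>j. ?y j + w n * ek n j) - Df g i ?y"
    by (subst Qn_step) (rule refl)
  also have "\<dots> = w n * (eval_form 1 (MDs g n i) ?y + kap g n i * w n)"
    unfolding Df_def exp2[OF fy Qn_at] MDs_def kap_def by (simp add: algebra_simps power2_eq_square)
  also have "\<dots> = (\<Sum>c\<leftarrow>sqN g n i h2 ii. c w ^ 2)"
    unfolding sqN_def by (rule sq2_sum[OF h2 ii, symmetric])
  finally show ?thesis .
qed

lemma linf_neg: "linf p \<Longrightarrow> linf (\<lambda>w. - p w)"
  unfolding linf_def by simp

lemma linf_addf: "linf p \<Longrightarrow> linf q \<Longrightarrow> linf (\<lambda>w. p w + q w)"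
  unfolding linf_def by (simp add: algebra_simps)

lemma linf_scalef: "linf p \<Longrightarrow> linf (\<lambda>w. c * p w)"
  unfolding linf_def by (simp add: algebra_simps)

lemma cube4_linf: "linf X \<Longrightarrow> linf p \<Longrightarrow> linf q \<Longrightarrow> c \<in> set (cube4 h X p q) \<Longrightarrow> linf c"
  unfolding cube4_def using linf_lc by auto

lemma cubeT_linf: "linf X \<Longrightarrow> linf L \<Longrightarrow> c \<in> set (cubeT h X L) \<Longrightarrow> linf c"
  unfolding cubeT_def using linf_lc by auto

lemma sq2_linf: "linf X \<Longrightarrow> linf L \<Longrightarrow> c \<in> set (sq2 h ii X L) \<Longrightarrow> linf c"
  unfolding sq2_def using linf_lc by auto

lemma cube4_zero: "X w = 0 \<Longrightarrow> p w = 0 \<Longrightarrow> q w = 0 \<Longrightarrow> c \<in> set (cube4 h X p q) \<Longrightarrow> c w = 0"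
  unfolding cube4_def lc_def by auto

lemma cubeT_zero: "X w = 0 \<Longrightarrow> L w = 0 \<Longrightarrow> c \<in> set (cubeT h X L) \<Longrightarrow> c w = 0"
  unfolding cubeT_def lc_def by auto

lemma sq2_zero: "X w = 0 \<Longrightarrow> L w = 0 \<Longrightarrow> c \<in> set (sq2 h ii X L) \<Longrightarrow> c w = 0"
  unfolding sq2_def lc_def by auto

lemma linf_e1Q: "linf (\<lambda>w. eval_form 1 a (Qn m w))"
  by (rule linf_Qn[OF linf_eval1])

lemma cubesN_linf:
  assumes "c \<in> set (cubesN g S cc sf af bf h n)"
  shows "linf c"
proof -
  have X: "linf (\<lambda>w::nat \<Rightarrow> 'a. w n)" by (rule linf_coord)
  have lamQ: "linf (\<lambda>w. - lam cc i (Qn (Suc n) w))" for i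
    unfolding lam_def by (rule linf_neg[OF linf_e1Q])
  have LQ: "linf (\<lambda>w. eval_form 1 (P2s g S cc n) (Qn (Suc n) w) + w n * P3 g S cc n)"
    by (rule linf_addf[OF linf_e1Q]) (simp only: mult.commute[of _ "P3 g S cc n"], rule linf_scalef[OF X])
  from assms consider
     (a) t where "c \<in> set (cube4 h (\<lambda>w. w n) (\<lambda>w. eval_form 1 (af n t) (Qn (Suc n) w)) (\<lambda>w. eval_form 1 (bf n t) (Qn (Suc n) w)))"
   | (b) i where "c \<in> set (cube4 h (\<lambda>w. w n) (\<lambda>w. - lam cc i (Qn (Suc n) w)) (\<lambda>w. eval_form 1 (MDs g n i) (Qn (Suc n) w)))"
   | (c) "c \<in> set (cubeT h (\<lambda>w. w n) (\<lambda>w. eval_form 1 (P2s g S cc n) (Qn (Suc n) w) + w n * P3 g S cc n))"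
    unfolding cubesN_def by auto
  thus ?thesis
  proof cases
    case a thus ?thesis by (rule cube4_linf[OF X linf_e1Q linf_e1Q])
  next
    case b thus ?thesis by (rule cube4_linf[OF X lamQ linf_e1Q])
  next
    case c thus ?thesis by (rule cubeT_linf[OF X LQ])
  qed
qed

lemma sqN_linf:
  assumes "c \<in> set (sqN g n i h2 ii)"
  shows "linf c"
proof -
  have L: "linf (\<lambda>w. eval_form 1 (MDs g n i) (Qn (Suc n) w) + kap g n i * w n)"
    by (rule linf_addf[OF linf_e1Q], rule linf_scalef[OF linf_coord])
  show ?thesis using assms unfolding sqN_def by (rule sq2_linf[OF linf_coord L])
qed

lemma cubesN_zero:
  fixes w :: "nat \<Rightarrow> 'k::field"
  assumes w: "supp w \<subseteq> {..<N}" and n: "N \<le> n" and c: "c \<in> set (cubesN g S cc sf af bf h n)"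
  shows "c w = 0"
proof -
  have Q: "Qn (Suc n) w = (\<lambda>i. 0)" by (rule Qn_vanish[OF w]) (use n in simp)
  have wn: "w n = 0" using w n by auto
  have e0: "eval_form 1 a (Qn (Suc n) w) = 0" for a :: "(nat,'k) fseries"
    unfolding Q by (rule eval_zero_vec) simp
  from c consider
     (a) t where "c \<in> set (cube4 h (\<lambda>w. w n) (\<lambda>w. eval_form 1 (af n t) (Qn (Suc n) w)) (\<lambda>w. eval_form 1 (bf n t) (Qn (Suc n) w)))"
   | (b) i where "c \<in> set (cube4 h (\<lambda>w. w n) (\<lambda>w. - lam cc i (Qn (Suc n) w)) (\<lambda>w. eval_form 1 (MDs g n i) (Qn (Suc n) w)))"
   | (c) "c \<in> set (cubeT h (\<lambda>w. w n) (\<lambda>w. eval_form 1 (P2s g S cc n) (Qn (Suc n) w) + w n * P3 g S cc n))"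
    unfolding cubesN_def by auto
  thus ?thesis
  proof cases
    case a thus ?thesis by (rule cube4_zero[rotated 3]) (simp_all add: wn e0 e0[simplified])
  next
    case b thus ?thesis by (rule cube4_zero[rotated 3]) (simp_all add: wn e0 e0[simplified] lam_def)
  next
    case c thus ?thesis by (rule cubeT_zero[rotated 2]) (simp_all add: wn e0 e0[simplified])
  qed
qed

lemma sqN_zero:
  fixes w :: "nat \<Rightarrow> 'k::field"
  assumes w: "supp w \<subseteq> {..<N}" and n: "N \<le> n" and c: "c \<in> set (sqN g n i h2 ii)"
  shows "c w = 0"
proof -
  have Q: "Qn (Suc n) w = (\<lambda>i. 0)" by (rule Qn_vanish[OF w]) (use n in simp)
  have wn: "w n = 0" using w n by auto
  have e0: "eval_form 1 a (Qn (Suc n) w) = 0" for a :: "(nat,'k) fseries"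
    unfolding Q by (rule eval_zero_vec) simp
  show ?thesis using c unfolding sqN_def by (rule sq2_zero[rotated 2]) (simp_all add: wn e0 e0[simplified])
qed



lemma fr_X:
  assumes "t < r"
  shows "(f_r r {#Xc t, Yc t j, Yc t j#} :: 'k::comm_ring_1) = 3"
proof -
  have "\<exists>i j'. i < r \<and> {#Xc t, Yc t j, Yc t j#} = {#Xc i, Yc i j', Yc i j'#}" using assms by blast
  thus ?thesis unfolding f_r_def by (simp only: if_True)
qed

lemma fr_Z: "(f_r r {#Zc i, Zc i, Zc i#} :: 'k::comm_ring_1) = 1"
proof -
  have "\<not> (\<exists>i' j. i' < r \<and> {#Zc i, Zc i, Zc i#} = {#Xc i', Yc i' j, Yc i' j#})"
  proof
    assume "\<exists>i' j. i' < r \<and> {#Zc i, Zc i, Zc i#} = {#Xc i', Yc i' j, Yc i' j#}"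
    then obtain i' j where e: "{#Zc i, Zc i, Zc i#} = {#Xc i', Yc i' j, Yc i' j#}" by blast
    have "Xc i' \<in># {#Xc i', Yc i' j, Yc i' j#}" by simp
    hence "Xc i' \<in># {#Zc i, Zc i, Zc i#}" unfolding e .
    thus False by simp
  qed
  moreover have "\<exists>i'. {#Zc i, Zc i, Zc i#} = {#Zc i', Zc i', Zc i'#}" by blast
  ultimately show ?thesis unfolding f_r_def by (simp only: if_False if_True)
qed

lemma fr_cases:
  assumes "(f_r r M :: 'k::comm_ring_1) \<noteq> 0"
  shows "(\<exists>i j. i < r \<and> M = {#Xc i, Yc i j, Yc i j#}) \<or> (\<exists>i. M = {#Zc i, Zc i, Zc i#})"
  using assms unfolding f_r_def by (auto split: if_splits)

lemma fr_eval:
  fixes v :: "vr_idx \<Rightarrow> 'k::field"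
  assumes fin: "finite (supp v)" and IZ: "finite IZ"
    and Y: "\<And>t j. t < r \<Longrightarrow> v (Yc t j) \<noteq> 0 \<Longrightarrow> j < NY"
    and Z: "\<And>i. v (Zc i) \<noteq> 0 \<Longrightarrow> i \<in> IZ"
  shows "eval_form 3 (f_r r) v = 3 * (\<Sum>t<r. \<Sum>j<NY. v (Xc t) * v (Yc t j)^2) + (\<Sum>i\<in>IZ. v (Zc i)^3)"
proof -
  define mx where "mx = (\<lambda>(t,j). {#Xc t, Yc t j, Yc t j#})"
  define mz where "mz = (\<lambda>i. {#Zc i, Zc i, Zc i#})"
  let ?XY = "mx ` ({..<r} \<times> {..<NY})" and ?ZZ = "mz ` IZ"
  have "eval_form 3 (f_r r) v = (\<Sum>M\<in>?XY \<union> ?ZZ. f_r r M * (\<Prod>i\<in>#M. v i))"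
  proof (rule eval_form_alt[OF fin])
    show "finite (?XY \<union> ?ZZ)" using IZ by simp
    show "\<forall>M\<in>?XY \<union> ?ZZ. size M = 3" by (auto simp: mx_def mz_def)
    fix M :: "vr_idx multiset" assume s: "size M = 3" and f: "f_r r M \<noteq> 0" and p: "(\<Prod>i\<in>#M. v i) \<noteq> 0"
    from fr_cases[OF f] show "M \<in> ?XY \<union> ?ZZ"
    proof
      assume "\<exists>i j. i < r \<and> M = {#Xc i, Yc i j, Yc i j#}"
      then obtain i j where ij: "i < r" "M = {#Xc i, Yc i j, Yc i j#}" by blast
      hence "v (Yc i j) \<noteq> 0" using p by auto
      hence "j < NY" using Y ij(1) by blast
      hence "M = mx (i,j)" "(i,j) \<in> {..<r} \<times> {..<NY}" using ij by (auto simp: mx_def)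
      thus ?thesis by blast
    next
      assume "\<exists>i. M = {#Zc i, Zc i, Zc i#}"
      then obtain i where i: "M = {#Zc i, Zc i, Zc i#}" by blast
      hence "v (Zc i) \<noteq> 0" using p by auto
      hence "i \<in> IZ" using Z by blast
      thus ?thesis using i by (auto simp: mz_def)
    qed
  qed
  also have "\<dots> = (\<Sum>M\<in>?XY. f_r r M * (\<Prod>i\<in>#M. v i)) + (\<Sum>M\<in>?ZZ. f_r r M * (\<Prod>i\<in>#M. v i))"
  proof (rule sum.union_disjoint)
    show "?XY \<inter> ?ZZ = {}"
    proof (rule equals0I)
      fix M assume "M \<in> ?XY \<inter> ?ZZ"
      hence M1: "M \<in> ?XY" and M2: "M \<in> ?ZZ" by auto
      from M1 obtain p where p: "M = mx p" by blast
      obtain t j where "p = (t,j)" by (cases p)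
      hence "Xc t \<in># M" using p by (simp add: mx_def)
      moreover from M2 obtain i where "M = mz i" by blast
      ultimately have "Xc t \<in># {#Zc i, Zc i, Zc i#}" by (simp add: mz_def)
      thus False by simp
    qed
  qed (use IZ in auto)
  also have "(\<Sum>M\<in>?XY. f_r r M * (\<Prod>i\<in>#M. v i)) = (\<Sum>p\<in>{..<r} \<times> {..<NY}. f_r r (mx p) * (\<Prod>i\<in>#mx p. v i))"
  proof (rule sum.reindex[unfolded comp_def])
    show "inj_on mx ({..<r} \<times> {..<NY})"
    proof (rule inj_onI)
      fix p q assume "p \<in> {..<r} \<times> {..<NY}" "q \<in> {..<r} \<times> {..<NY}" and e: "mx p = mx q"
      obtain t j where p: "p = (t,j)" by (cases p)
      obtain t' j' where q: "q = (t',j')" by (cases q)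
      have "set_mset (mx p) = set_mset (mx q)" using e by simp
      hence "{Xc t, Yc t j} = {Xc t', Yc t' j'}" by (simp add: mx_def p q)
      hence "t = t'" "j = j'" by (auto simp: doubleton_eq_iff)
      thus "p = q" using p q by simp
    qed
  qed
  also have "\<dots> = (\<Sum>p\<in>{..<r} \<times> {..<NY}. 3 * (v (Xc (fst p)) * v (Yc (fst p) (snd p))^2))"
    by (rule sum.cong[OF refl]) (auto simp: mx_def fr_X power2_eq_square mult_ac)
  also have "\<dots> = 3 * (\<Sum>p\<in>{..<r} \<times> {..<NY}. v (Xc (fst p)) * v (Yc (fst p) (snd p))^2)"
    by (rule sum_distrib_left[symmetric])
  also have "(\<Sum>p\<in>{..<r} \<times> {..<NY}. v (Xc (fst p)) * v (Yc (fst p) (snd p))^2) = (\<Sum>t<r. \<Sum>j<NY. v (Xc t) * v (Yc t j)^2)"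
    unfolding sum.cartesian_product case_prod_beta ..
  also have "(\<Sum>M\<in>?ZZ. f_r r M * (\<Prod>i\<in>#M. v i)) = (\<Sum>i\<in>IZ. f_r r (mz i) * (\<Prod>i\<in>#mz i. v i))"
  proof (rule sum.reindex[unfolded comp_def], rule inj_onI)
    fix x y assume "x \<in> IZ" "y \<in> IZ" and e: "mz x = mz y"
    have "Zc x \<in># mz x" by (simp add: mz_def)
    hence "Zc x \<in># mz y" unfolding e .
    thus "x = y" by (simp add: mz_def)
  qed
  also have "\<dots> = (\<Sum>i\<in>IZ. v (Zc i)^3)"
    by (rule sum.cong[OF refl]) (simp add: mz_def fr_Z power3_eq_cube)
  finally show ?thesis .
qed



lemma sum_double: "(\<Sum>j<2*(N::nat). (f j :: 'a::comm_monoid_add)) = (\<Sum>n<N. f (2*n) + f (2*n+1))"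
  by (induction N) (simp_all add: add_ac)

lemma sum_nth_list: "(\<Sum>t<length xs. f (xs ! t)) = sum_list (map f xs)"
  by (simp add: sum_list_sum_nth atLeast0LessThan)

lemma linf_div: "linf p \<Longrightarrow> linf (\<lambda>w. p w / c)"
  unfolding linf_def by (simp add: add_divide_distrib)

lemma linf_const0: "linf (\<lambda>w. 0)"
  unfolding linf_def by simp

lemma sqN_sum_nth: "(\<Sum>c\<leftarrow>sqN g n i h2 ii. c w ^ 2) = (sqN g n i h2 ii ! 0) w ^ 2 + (sqN g n i h2 ii ! 1) w ^ 2"
  by (simp add: sqN_def sq2_def)

lemma length_sqN: "length (sqN g n i h2 ii) = 2"
  by (simp add: sqN_def sq2_def)

lemma Cf_zero: "Cf g S cc (\<lambda>i. 0::'k::field) = 0"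
  by (simp add: Cf_def lam_def Df_def eval_zero_vec)

lemma Df_zero: "Df g i (\<lambda>i. 0::'k::field) = 0"
  by (simp add: Df_def eval_zero_vec)



theorem lemma5p3:
  fixes r :: nat and J :: "nat set" and g :: "(nat, 'k::field) fseries"
  assumes alg_closed: "\<forall>p::'k poly. degree p \<noteq> 0 \<longrightarrow> (\<exists>x. poly p x = 0)"
    and char2: "(2::'k) \<noteq> 0" and char3: "(3::'k) \<noteq> 0"
    and cubic: "cubic_form J g"
    and rrk: "rrk J g \<le> enat r"
  shows "\<exists>\<phi>. cubic_embedding J g (vr_coords r) (f_r r) \<phi>"
proof -
  obtain S cc where S: "finite S" and cardS: "card S \<le> r"
    and rel: "\<forall>j. fin_strength_quadric (\<lambda>M. fderiv j g M - (\<Sum>i\<in>S. cc j i * fderiv i g M))"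
    using rrk_relations[OF cubic rrk] by blast
  define Q where "Q n s a b \<longleftrightarrow> (\<forall>v::nat \<Rightarrow> 'k. finite (supp v) \<longrightarrow>
      Df g n v - (\<Sum>i\<in>S. cc n i * Df g i v) = (\<Sum>t<s. eval_form 1 (a t) v * eval_form 1 (b t) v))"
    for n s :: nat and a b :: "nat \<Rightarrow> (nat, 'k) fseries"
  have ex: "\<forall>n. \<exists>s a b. Q n s a b"
  proof
    fix n
    obtain s :: nat and a b where sab: "\<forall>v::nat \<Rightarrow> 'k. finite (supp v) \<longrightarrow>
        eval_form 2 (\<lambda>M. fderiv n g M - (\<Sum>i\<in>S. cc n i * fderiv i g M)) v =
        (\<Sum>t<s. eval_form 1 (a t) v * eval_form 1 (b t) v)"
      using fin_strength_eval[OF rel[rule_format, of n]] by blast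
    have "eval_form 2 (\<lambda>M. fderiv n g M - (\<Sum>i\<in>S. cc n i * fderiv i g M)) v = Df g n v - (\<Sum>i\<in>S. cc n i * Df g i v)"
      for v :: "nat \<Rightarrow> 'k"
      by (simp only: eval_diff_series eval_sum_series eval_scale_series Df_def)
    hence "Q n s a b" using sab unfolding Q_def by simp
    thus "\<exists>s a b. Q n s a b" by blast
  qed
  from choice[OF ex] obtain sf where "\<forall>n. \<exists>a b. Q n (sf n) a b" by blast
  from choice[OF this] obtain af where "\<forall>n. \<exists>b. Q n (sf n) (af n) b" by blast
  from choice[OF this] obtain bf where HS: "\<forall>n. Q n (sf n) (af n) (bf n)" by blast
  have six: "(6::'k) \<noteq> 0"
  proof -
    have "(2::'k) * 3 \<noteq> 0" by (rule no_zero_divisors[OF char2 char3])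
    thus ?thesis by simp
  qed
  define h :: 'k where "h = inverse 6"
  have h: "6 * h = 1" unfolding h_def using six by simp
  define h2 :: 'k where "h2 = inverse 2"
  have h2: "2 * h2 = 1" unfolding h2_def using char2 by simp
  obtain ii :: 'k where ii: "ii * ii = -1"
  proof -
    have "degree [:1, 0, 1::'k:] \<noteq> 0" by simp
    then obtain x where "poly [:1, 0, 1::'k:] x = 0" using alg_closed by blast
    hence "x * x = -1" by (simp add: algebra_simps eq_neg_iff_add_eq_0)
    thus ?thesis using that by blast
  qed
  define Sl where "Sl = sorted_list_of_set S"
  have lenSl: "length Sl = card S" unfolding Sl_def by simp
  define cub where "cub = cubesN g S cc sf af bf h"
  define phi where "phi w = (\<lambda>v. case v of
      Xc t \<Rightarrow> if t < card S then lam cc (Sl ! t) w / 3 else 0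
    | Yc t j \<Rightarrow> if t < card S then (sqN g (j div 2) (Sl ! t) h2 ii ! (j mod 2)) w else 0
    | Zc z \<Rightarrow> (case prod_decode z of (n, m) \<Rightarrow> if m < length (cub n) then (cub n ! m) w else 0))"
    for w :: "nat \<Rightarrow> 'k"

  have finw: "finite (supp w)" if "w \<in> fin_vecs J" for w :: "nat \<Rightarrow> 'k"
    using that by (simp add: fin_vecs_def)
  have phiX: "phi w (Xc t) = (if t < card S then lam cc (Sl ! t) w / 3 else 0)" for w t
    by (simp add: phi_def)
  have phiY: "phi w (Yc t j) = (if t < card S then (sqN g (j div 2) (Sl ! t) h2 ii ! (j mod 2)) w else 0)" for w t j
    by (simp add: phi_def)
  have phiZ: "phi w (Zc (prod_encode (n, m))) = (if m < length (cub n) then (cub n ! m) w else 0)" for w n m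
    by (simp add: phi_def prod_encode_inverse)
  have phiZ': "phi w (Zc z) = (case prod_decode z of (n, m) \<Rightarrow> if m < length (cub n) then (cub n ! m) w else 0)" for w z
    by (simp add: phi_def)
  have lin: "linf (\<lambda>w. phi w v)" for v
  proof (cases v)
    case (Xc t)
    show ?thesis
    proof (cases "t < card S")
      case True
      hence "(\<lambda>w. phi w v) = (\<lambda>w. eval_form 1 (lamser cc (Sl ! t)) w / 3)" using Xc by (simp add: phiX lam_def)
      thus ?thesis by (simp only: linf_div[OF linf_eval1])
    next
      case False
      hence "(\<lambda>w. phi w v) = (\<lambda>w. 0)" using Xc by (simp add: phiX)
      thus ?thesis by (simp only: linf_const0)
    qed
  next
    case (Yc t j)
    show ?thesis
    proof (cases "t < card S")
      case True
      hence e: "(\<lambda>w. phi w v) = sqN g (j div 2) (Sl ! t) h2 ii ! (j mod 2)" using Yc by (simp add: phiY)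
      have "j mod 2 < length (sqN g (j div 2) (Sl ! t) h2 ii)" by (simp add: length_sqN)
      hence "sqN g (j div 2) (Sl ! t) h2 ii ! (j mod 2) \<in> set (sqN g (j div 2) (Sl ! t) h2 ii)" by (rule nth_mem)
      thus ?thesis unfolding e by (rule sqN_linf)
    next
      case False
      hence "(\<lambda>w. phi w v) = (\<lambda>w. 0)" using Yc by (simp add: phiY)
      thus ?thesis by (simp only: linf_const0)
    qed
  next
    case (Zc z)
    obtain n m where nm: "prod_decode z = (n, m)" by (cases "prod_decode z")
    show ?thesis
    proof (cases "m < length (cub n)")
      case True
      hence e: "(\<lambda>w. phi w v) = cub n ! m" using Zc nm by (simp add: phiZ')
      have "cub n ! m \<in> set (cub n)" using True by (rule nth_mem)
      thus ?thesis unfolding e cub_def by (rule cubesN_linf)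
    next
      case False
      hence "(\<lambda>w. phi w v) = (\<lambda>w. 0)" using Zc nm by (simp add: phiZ')
      thus ?thesis by (simp only: linf_const0)
    qed
  qed
  have lin_add: "phi (\<lambda>i. u i + w i) = (\<lambda>v. phi u v + phi w v)"
    if "finite (supp u)" "finite (supp w)" for u w
  proof (rule ext)
    fix v show "phi (\<lambda>i. u i + w i) v = phi u v + phi w v" using lin[of v] that unfolding linf_def by blast
  qed
  have lin_smult: "phi (\<lambda>i. c * w i) = (\<lambda>v. c * phi w v)" if "finite (supp w)" for c w
  proof (rule ext)
    fix v show "phi (\<lambda>i. c * w i) v = c * phi w v" using lin[of v] that unfolding linf_def by blast
  qed
  define IZ where "IZ N = prod_encode ` (SIGMA n:{..<N}. {..<length (cub n)})" for N
  have finIZ: "finite (IZ N)" for N unfolding IZ_def by (intro finite_imageI finite_SigmaI) auto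
  have Ynz: "t < card S \<and> j < 2 * N" if N: "supp w \<subseteq> {..<N}" and nz: "phi w (Yc t j) \<noteq> 0" for w N t j
  proof
    show t: "t < card S" using nz by (auto simp: phiY split: if_splits)
    show "j < 2 * N"
    proof (rule ccontr)
      assume "\<not> j < 2 * N"
      hence "N \<le> j div 2" by simp
      moreover have "j mod 2 < length (sqN g (j div 2) (Sl ! t) h2 ii)" by (simp add: length_sqN)
      hence "sqN g (j div 2) (Sl ! t) h2 ii ! (j mod 2) \<in> set (sqN g (j div 2) (Sl ! t) h2 ii)" by (rule nth_mem)
      ultimately have "(sqN g (j div 2) (Sl ! t) h2 ii ! (j mod 2)) w = 0" using sqN_zero[OF N] by blast
      thus False using nz t by (simp add: phiY)
    qed
  qed
  have Znz: "z \<in> IZ N" if N: "supp w \<subseteq> {..<N}" and nz: "phi w (Zc z) \<noteq> 0" for w N z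
  proof -
    obtain n m where nm: "prod_decode z = (n, m)" by (cases "prod_decode z")
    have z: "z = prod_encode (n, m)" using nm by (metis prod_decode_inverse)
    have m: "m < length (cub n)" and c: "(cub n ! m) w \<noteq> 0" using nz nm by (auto simp: phiZ' split: if_splits)
    have "n < N"
    proof (rule ccontr)
      assume "\<not> n < N"
      hence "N \<le> n" by simp
      moreover have "cub n ! m \<in> set (cub n)" using m by (rule nth_mem)
      ultimately have "(cub n ! m) w = 0" unfolding cub_def by (rule cubesN_zero[OF N])
      thus False using c by simp
    qed
    thus ?thesis using m z unfolding IZ_def by blast
  qed
  have fin_phi: "finite (supp (phi w))" if fw: "finite (supp w)" for w
  proof -
    obtain N where N: "supp w \<subseteq> {..<N}" using finite_nat_bounded[OF fw] by blast
    have "supp (phi w) \<subseteq> Xc ` {..<card S} \<union> (\<lambda>p. Yc (fst p) (snd p)) ` ({..<card S} \<times> {..<2*N}) \<union> Zc ` IZ N"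
    proof
      fix v assume v: "v \<in> supp (phi w)"
      show "v \<in> Xc ` {..<card S} \<union> (\<lambda>p. Yc (fst p) (snd p)) ` ({..<card S} \<times> {..<2*N}) \<union> Zc ` IZ N"
      proof (cases v)
        case (Xc t)
        hence "t < card S" using v by (auto simp: phiX split: if_splits)
        thus ?thesis using Xc by blast
      next
        case (Yc t j)
        hence "t < card S \<and> j < 2 * N" using Ynz[OF N] v by blast
        hence "(t, j) \<in> {..<card S} \<times> {..<2*N}" by simp
        hence "Yc t j \<in> (\<lambda>p. Yc (fst p) (snd p)) ` ({..<card S} \<times> {..<2*N})" by (rule rev_image_eqI) simp
        thus ?thesis using Yc by blast
      next
        case (Zc z)
        hence "z \<in> IZ N" using Znz[OF N] v by blast
        thus ?thesis using Zc by blast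
      qed
    qed
    moreover have "finite (Xc ` {..<card S} \<union> (\<lambda>p. Yc (fst p) (snd p)) ` ({..<card S} \<times> {..<2*N}) \<union> Zc ` IZ N)"
      using finIZ by simp
    ultimately show ?thesis by (rule finite_subset)
  qed
  have out: "phi w v = 0" if "v \<notin> vr_coords r" for w v
  proof (cases v)
    case (Xc t)
    hence "\<not> t < r" using that by (auto simp: vr_coords_def)
    hence "\<not> t < card S" using cardS by simp
    thus ?thesis using Xc by (simp add: phiX)
  next
    case (Yc t j)
    hence "\<not> t < r" using that by (auto simp: vr_coords_def)
    hence "\<not> t < card S" using cardS by simp
    thus ?thesis using Yc by (simp add: phiY)
  next
    case (Zc z)
    hence False using that by (auto simp: vr_coords_def)
    thus ?thesis ..
  qed
  have evalpres: "eval_form 3 (f_r r) (phi w) = eval_form 3 g w" if fw: "finite (supp w)" for w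
  proof -
    obtain N where N: "supp w \<subseteq> {..<N}" using finite_nat_bounded[OF fw] by blast
    have E: "eval_form 3 (f_r r) (phi w) = 3 * (\<Sum>t<r. \<Sum>j<2*N. phi w (Xc t) * phi w (Yc t j)^2) + (\<Sum>z\<in>IZ N. phi w (Zc z)^3)"
      by (rule fr_eval[OF fin_phi[OF fw] finIZ]) (use Ynz[OF N] Znz[OF N] in blast)+
    have Ysum: "(\<Sum>j<2*N. phi w (Yc t j)^2) = Df g (Sl ! t) w" if t: "t < card S" for t
    proof -
      have "(\<Sum>j<2*N. phi w (Yc t j)^2) = (\<Sum>n<N. phi w (Yc t (2*n))^2 + phi w (Yc t (2*n+1))^2)"
        by (rule sum_double)
      also have "\<dots> = (\<Sum>n<N. Df g (Sl ! t) (Qn n w) - Df g (Sl ! t) (Qn (Suc n) w))"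
      proof (rule sum.cong[OF refl])
        fix n
        have "phi w (Yc t (2*n))^2 + phi w (Yc t (2*n+1))^2 = (\<Sum>c\<leftarrow>sqN g n (Sl ! t) h2 ii. c w ^ 2)"
          using t by (simp add: phiY sqN_sum_nth)
        also have "\<dots> = Df g (Sl ! t) (Qn n w) - Df g (Sl ! t) (Qn (Suc n) w)"
          by (rule step_sq[OF h2 ii fw, symmetric])
        finally show "phi w (Yc t (2*n))^2 + phi w (Yc t (2*n+1))^2 = Df g (Sl ! t) (Qn n w) - Df g (Sl ! t) (Qn (Suc n) w)" .
      qed
      also have "\<dots> = Df g (Sl ! t) w"
        by (rule telescope[where F="Df g (Sl ! t)", OF N Df_zero, symmetric])
      finally show ?thesis .
    qed
    have "(\<Sum>t<r. \<Sum>j<2*N. phi w (Xc t) * phi w (Yc t j)^2) = (\<Sum>t<card S. \<Sum>j<2*N. phi w (Xc t) * phi w (Yc t j)^2)"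
    proof (rule sum.mono_neutral_right)
      show "\<forall>t\<in>{..<r} - {..<card S}. (\<Sum>j<2*N. phi w (Xc t) * phi w (Yc t j)^2) = 0"
        by (auto simp: phiX)
    qed (use cardS in auto)
    also have "\<dots> = (\<Sum>t<card S. lam cc (Sl ! t) w / 3 * Df g (Sl ! t) w)"
    proof (rule sum.cong[OF refl])
      fix t assume "t \<in> {..<card S}"
      hence t: "t < card S" by simp
      have "(\<Sum>j<2*N. phi w (Xc t) * phi w (Yc t j)^2) = phi w (Xc t) * (\<Sum>j<2*N. phi w (Yc t j)^2)"
        by (rule sum_distrib_left[symmetric])
      thus "(\<Sum>j<2*N. phi w (Xc t) * phi w (Yc t j)^2) = lam cc (Sl ! t) w / 3 * Df g (Sl ! t) w"
        using t Ysum[OF t] by (simp add: phiX)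
    qed
    finally have Y3: "3 * (\<Sum>t<r. \<Sum>j<2*N. phi w (Xc t) * phi w (Yc t j)^2) = (\<Sum>i\<in>S. lam cc i w * Df g i w)"
    proof -
      assume a: "(\<Sum>t<r. \<Sum>j<2*N. phi w (Xc t) * phi w (Yc t j)^2) = (\<Sum>t<card S. lam cc (Sl ! t) w / 3 * Df g (Sl ! t) w)"
      have "3 * (\<Sum>t<card S. lam cc (Sl ! t) w / 3 * Df g (Sl ! t) w) = (\<Sum>t<card S. 3 * (lam cc (Sl ! t) w / 3 * Df g (Sl ! t) w))"
        by (rule sum_distrib_left)
      also have "\<dots> = (\<Sum>t<length Sl. (\<lambda>i. lam cc i w * Df g i w) (Sl ! t))"
        using char3 lenSl by simp
      also have "\<dots> = (\<Sum>i\<in>S. lam cc i w * Df g i w)"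
        using sum_nth_list[of "\<lambda>i. lam cc i w * Df g i w" Sl] sum_list_sorted[OF S, of "\<lambda>i. lam cc i w * Df g i w"]
        by (simp add: Sl_def)
      finally show ?thesis using a by simp
    qed
    have Z3: "(\<Sum>z\<in>IZ N. phi w (Zc z)^3) = Cf g S cc w"
    proof -
      have "(\<Sum>z\<in>IZ N. phi w (Zc z)^3) = (\<Sum>p\<in>(SIGMA n:{..<N}. {..<length (cub n)}). phi w (Zc (prod_encode p))^3)"
        unfolding IZ_def by (rule sum.reindex[unfolded comp_def]) (rule inj_prod_encode)
      also have "\<dots> = (\<Sum>p\<in>(SIGMA n:{..<N}. {..<length (cub n)}). (cub (fst p) ! snd p) w ^ 3)"
        by (rule sum.cong[OF refl]) (auto simp: phiZ)
      also have "\<dots> = (\<Sum>n<N. \<Sum>m<length (cub n). (cub n ! m) w ^ 3)"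
        using sum.Sigma[where A="{..<N}" and B="\<lambda>n. {..<length (cub n)}" and g="\<lambda>n m. (cub n ! m) w ^ 3"]
        by (simp add: case_prod_beta)
      also have "\<dots> = (\<Sum>n<N. \<Sum>c\<leftarrow>cub n. c w ^ 3)"
        by (simp only: sum_nth_list[of "\<lambda>c. c w ^ 3"])
      also have "\<dots> = (\<Sum>n<N. Cf g S cc (Qn n w) - Cf g S cc (Qn (Suc n) w))"
      proof (rule sum.cong[OF refl])
        fix n
        have "Q n (sf n) (af n) (bf n)" using HS by blast
        hence "\<forall>v. finite (supp v) \<longrightarrow> Df g n v - (\<Sum>i\<in>S. cc n i * Df g i v) =
               (\<Sum>t<sf n. eval_form 1 (af n t) v * eval_form 1 (bf n t) v)" unfolding Q_def .
        from step_cubes[where g=g and n=n and cc=cc and sf=sf and af=af and bf=bf, OF h S fw this]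
        show "(\<Sum>c\<leftarrow>cub n. c w ^ 3) = Cf g S cc (Qn n w) - Cf g S cc (Qn (Suc n) w)"
          unfolding cub_def by simp
      qed
      also have "\<dots> = Cf g S cc w" by (rule telescope[where F="Cf g S cc", OF N Cf_zero, symmetric])
      finally show ?thesis .
    qed
    show ?thesis unfolding E Y3 Z3 Cf_def by simp
  qed
  have "cubic_embedding J g (vr_coords r) (f_r r) phi"
    unfolding cubic_embedding_def
  proof (intro conjI ballI allI)
    fix w :: "nat \<Rightarrow> 'k" assume w: "w \<in> fin_vecs J"
    show "phi w \<in> fin_vecs (vr_coords r)"
      unfolding fin_vecs_def using fin_phi[OF finw[OF w]] out by blast
  next
    fix v w :: "nat \<Rightarrow> 'k" assume "v \<in> fin_vecs J" "w \<in> fin_vecs J"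
    thus "phi (\<lambda>j. v j + w j) = (\<lambda>i. phi v i + phi w i)" by (intro lin_add finw)
  next
    fix c :: 'k and w :: "nat \<Rightarrow> 'k" assume "w \<in> fin_vecs J"
    thus "phi (\<lambda>j. c * w j) = (\<lambda>i. c * phi w i)" by (intro lin_smult finw)
  next
    fix w :: "nat \<Rightarrow> 'k" assume w: "w \<in> fin_vecs J"
    show "eval_form 3 (f_r r) (phi w) = eval_form 3 g w" by (rule evalpres[OF finw[OF w]])
  qed
  thus ?thesis by blast
qed


end
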